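(* Let $\sigma$ be a full-rank $d$-dimensional quantum state with eigendecomposition $\sigma=\sum_{i=1}^dq(i)\,|e_i\rangle\langle e_i|$ and minimum eigenvalue $\gamma=\min_iq(i)$. Let $\rho_1,\dots,\rho_T$ ($T\ge2$) be $d$-dimensional states, $\varrho=\rho_1\otimes\cdots\otimes\rho_T$, $\rho=\frac1T\sum_t\rho_t$, and $\mu=D_{\chi^2}(\rho\,\|\,\sigma)$. Define the observable $C=\sum_{i,j=1}^d\frac{|e_je_i\rangle\langle e_ie_j|}{q(i,j)}$ on $(\mathbb C^d)^{\otimes2}$ with $q(i,j)=\frac{q(i)+q(j)}2$, let $C_{st}$ denote $C$ applied to the $s$th and $t$th tensor components of $(\mathbb C^d)^{\otimes T}$, and let $M=\frac{T-1}T\Big(\binom T2^{-1}\sum_{1\le s<t\le T}C_{st}-I\Big)$. Then $$\big|\mathbb E_\varrho[M]-\mu\big|\le\sqrt{\frac d{\gamma T}}\sqrt\mu+\frac{d-1}T.$$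
   Context: $\mathbb E_\varrho[Y]=\mathrm{Tr}[\varrho Y]$. Bures $\chi^2$-divergence: writing $\sigma=U\,\mathrm{diag}(q_1,\dots,q_d)U^\dagger$ and $\rho'=U^\dagger\rho U$, $D_{\chi^2}(\rho\,\|\,\sigma)=\sum_{i,j}\frac{2}{q_i+q_j}|\rho'_{ij}|^2-1$. *)

theory Defs
  imports Complex_Main
begin

text \<open>A d-dimensional operator is a function A :: nat => nat => complex,
  only its entries A x y with x, y < d being relevant (computational basis indices 0..d-1).
  The T-fold tensor power (C^d)^{\<otimes>T} has the computational basis indexed by lists
  a of length T with entries < d; component t (0-based) of the tensor product corresponds
  to a ! t.\<close>

definition mtrace :: "nat \<Rightarrow> (nat \<Rightarrow> nat \<Rightarrow> complex) \<Rightarrow> complex" where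
  "mtrace d A = (\<Sum>i<d. A i i)"

definition is_state :: "nat \<Rightarrow> (nat \<Rightarrow> nat \<Rightarrow> complex) \<Rightarrow> bool" where
  "is_state d \<rho> \<longleftrightarrow>
     (\<forall>i<d. \<forall>j<d. \<rho> j i = cnj (\<rho> i j)) \<and>
     (\<forall>v :: nat \<Rightarrow> complex.
        (\<Sum>i<d. \<Sum>j<d. cnj (v i) * \<rho> i j * v j) \<in> \<real> \<and>
        0 \<le> Re (\<Sum>i<d. \<Sum>j<d. cnj (v i) * \<rho> i j * v j)) \<and>
     mtrace d \<rho> = 1"

definition orthonormal_basis :: "nat \<Rightarrow> (nat \<Rightarrow> nat \<Rightarrow> complex) \<Rightarrow> bool" where
  "orthonormal_basis d e \<longleftrightarrow>
     (\<forall>i<d. \<forall>j<d. (\<Sum>x<d. cnj (e i x) * e j x) = (if i = j then 1 else 0))"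

text \<open>Bures chi^2-divergence D(rho || sigma), where sigma = sum_i q i |e_i><e_i|
  (U has columns e_i, rho' = U^dagger rho U, so rho'_{ij} = <e_i| rho |e_j>).\<close>
definition chi2_div ::
  "nat \<Rightarrow> (nat \<Rightarrow> real) \<Rightarrow> (nat \<Rightarrow> nat \<Rightarrow> complex) \<Rightarrow> (nat \<Rightarrow> nat \<Rightarrow> complex) \<Rightarrow> real" where
  "chi2_div d q e \<rho> =
     (\<Sum>i<d. \<Sum>j<d. 2 / (q i + q j) *
        (cmod (\<Sum>x<d. \<Sum>y<d. cnj (e i x) * \<rho> x y * e j y))\<^sup>2) - 1"

definition multi_idx :: "nat \<Rightarrow> nat \<Rightarrow> nat list set" where
  "multi_idx d T = {a. length a = T \<and> (\<forall>k\<in>set a. k < d)}"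

definition prod_state :: "nat \<Rightarrow> (nat \<Rightarrow> nat \<Rightarrow> nat \<Rightarrow> complex) \<Rightarrow> nat list \<Rightarrow> nat list \<Rightarrow> complex" where
  "prod_state T \<rho>s a b = (\<Prod>t<T. \<rho>s t (a ! t) (b ! t))"

definition expect :: "nat \<Rightarrow> nat \<Rightarrow> (nat list \<Rightarrow> nat list \<Rightarrow> complex) \<Rightarrow> (nat list \<Rightarrow> nat list \<Rightarrow> complex) \<Rightarrow> complex" where
  "expect d T R Y = (\<Sum>a\<in>multi_idx d T. \<Sum>b\<in>multi_idx d T. R a b * Y b a)"

text \<open>The observable C = sum_{i,j} |e_j e_i><e_i e_j| / q(i,j) on (C^d)^{\<otimes>2},
  q(i,j) = (q i + q j)/2, as a matrix in the computational basis indexed by pairs.\<close>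
definition Cop :: "nat \<Rightarrow> (nat \<Rightarrow> real) \<Rightarrow> (nat \<Rightarrow> nat \<Rightarrow> complex) \<Rightarrow> nat \<times> nat \<Rightarrow> nat \<times> nat \<Rightarrow> complex" where
  "Cop d q e xy xy' = (case xy of (x, y) \<Rightarrow> case xy' of (x', y') \<Rightarrow>
     (\<Sum>i<d. \<Sum>j<d. e j x * e i y * cnj (e i x') * cnj (e j y') /
        complex_of_real ((q i + q j) / 2)))"

definition Cst :: "nat \<Rightarrow> (nat \<Rightarrow> real) \<Rightarrow> (nat \<Rightarrow> nat \<Rightarrow> complex) \<Rightarrow> nat \<Rightarrow> nat \<Rightarrow> nat list \<Rightarrow> nat list \<Rightarrow> complex" where
  "Cst d q e s t a b =
     Cop d q e (a ! s, a ! t) (b ! s, b ! t) *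
     (if (\<forall>u<length a. u \<noteq> s \<and> u \<noteq> t \<longrightarrow> a ! u = b ! u) then 1 else 0)"

definition Mop :: "nat \<Rightarrow> (nat \<Rightarrow> real) \<Rightarrow> (nat \<Rightarrow> nat \<Rightarrow> complex) \<Rightarrow> nat \<Rightarrow> nat list \<Rightarrow> nat list \<Rightarrow> complex" where
  "Mop d q e T a b =
     complex_of_real ((real T - 1) / real T) *
     (complex_of_real (1 / real (T choose 2)) *
        (\<Sum>t<T. \<Sum>s<t. Cst d q e s t a b) - (if a = b then 1 else 0))"

end

theory Submission
  imports Defs "Jordan_Normal_Form.Determinant"
begin


lemma onb_complete:
  assumes onb: "orthonormal_basis d e" and xy: "x < d" "y < d"
  shows "(\<Sum>i<d. e i x * cnj (e i y)) = (if x = y then 1 else 0)"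
proof -
  define A where "A = mat d d (\<lambda>(i,x). cnj (e i x))"
  define B where "B = mat d d (\<lambda>(x,j). e j x)"
  have A: "A \<in> carrier_mat d d" and B: "B \<in> carrier_mat d d" by (auto simp: A_def B_def)
  have "A * B = 1\<^sub>m d"
    by (rule eq_matI) (use onb in \<open>auto simp: A_def B_def scalar_prod_def orthonormal_basis_def lessThan_atLeast0\<close>)
  from mat_mult_left_right_inverse[OF A B this] have "B * A = 1\<^sub>m d" .
  hence "(B * A) $$ (x,y) = 1\<^sub>m d $$ (x,y)" by simp
  thus ?thesis using xy by (simp add: A_def B_def scalar_prod_def lessThan_atLeast0 mult.commute)
qed

lemma multi_idx_0: "multi_idx d 0 = {[]}" by (auto simp: multi_idx_def)

lemma multi_idx_Suc: "multi_idx d (Suc T) = (\<lambda>(a,x). a @ [x]) ` (multi_idx d T \<times> {..<d})"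
proof
  show "multi_idx d (Suc T) \<subseteq> (\<lambda>(a,x). a @ [x]) ` (multi_idx d T \<times> {..<d})"
  proof
    fix a assume "a \<in> multi_idx d (Suc T)"
    then obtain y ys where "a = ys @ [y]" "length ys = T" "\<forall>k\<in>set a. k < d"
      by (auto simp: multi_idx_def length_Suc_conv_rev)
    thus "a \<in> (\<lambda>(a,x). a @ [x]) ` (multi_idx d T \<times> {..<d})"
      by (auto simp: multi_idx_def image_iff)
  qed
qed (auto simp: multi_idx_def)

lemma multi_sum1:
  "(\<Sum>a\<in>multi_idx d T. \<Prod>t<T. f t (a!t)) = (\<Prod>t<T. \<Sum>x<d. (f t x :: complex))"
proof (induction T)
  case 0 thus ?case by (simp add: multi_idx_0)
next
  case (Suc T)
  have inj: "inj_on (\<lambda>(a,x). a @ [x]) (multi_idx d T \<times> {..<d})"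
    by (auto simp: inj_on_def)
  have "(\<Sum>a\<in>multi_idx d (Suc T). \<Prod>t<Suc T. f t (a!t))
      = (\<Sum>(a,x)\<in>multi_idx d T \<times> {..<d}. \<Prod>t<Suc T. f t ((a@[x])!t))"
    unfolding multi_idx_Suc by (subst sum.reindex[OF inj]) (simp add: case_prod_beta)
  also have "\<dots> = (\<Sum>(a,x)\<in>multi_idx d T \<times> {..<d}. (\<Prod>t<T. f t (a!t)) * f T x)"
  proof (rule sum.cong[OF refl])
    fix p assume "p \<in> multi_idx d T \<times> {..<d}"
    then obtain a x where p: "p = (a,x)" and "a \<in> multi_idx d T" by auto
    hence l: "length a = T" by (simp add: multi_idx_def)
    have "(\<Prod>t<T. f t ((a@[x])!t)) = (\<Prod>t<T. f t (a!t))"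
      by (rule prod.cong) (auto simp: nth_append l)
    thus "(case p of (a,x) \<Rightarrow> \<Prod>t<Suc T. f t ((a @ [x]) ! t)) = (case p of (a,x) \<Rightarrow> (\<Prod>t<T. f t (a ! t)) * f T x)"
      using l by (simp add: nth_append p)
  qed
  also have "\<dots> = (\<Sum>a\<in>multi_idx d T. \<Prod>t<T. f t (a!t)) * (\<Sum>x<d. f T x)"
    by (simp add: sum_product sum.cartesian_product)
  finally show ?case using Suc by simp
qed

lemma multi_sum2:
  "(\<Sum>a\<in>multi_idx d T. \<Sum>b\<in>multi_idx d T. \<Prod>t<T. g t (a!t) (b!t))
     = (\<Prod>t<T. \<Sum>x<d. \<Sum>y<d. (g t x y :: complex))"
proof -
  have "(\<Sum>a\<in>multi_idx d T. \<Sum>b\<in>multi_idx d T. \<Prod>t<T. g t (a!t) (b!t))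
     = (\<Sum>a\<in>multi_idx d T. \<Prod>t<T. \<Sum>y<d. g t (a!t) y)"
    by (rule sum.cong[OF refl], rule multi_sum1)
  also have "\<dots> = (\<Prod>t<T. \<Sum>x<d. \<Sum>y<d. g t x y)"
    by (rule multi_sum1)
  finally show ?thesis .
qed


definition Pm :: "nat \<Rightarrow> (nat \<Rightarrow> nat \<Rightarrow> complex) \<Rightarrow> (nat \<Rightarrow> nat \<Rightarrow> complex) \<Rightarrow> nat \<Rightarrow> nat \<Rightarrow> complex" where
  "Pm d e A i j = (\<Sum>x<d. \<Sum>y<d. cnj (e i x) * A x y * e j y)"

lemma Pm_herm:
  assumes h: "\<forall>i<d. \<forall>j<d. A j i = cnj (A i j)"
  shows "Pm d e A j i = cnj (Pm d e A i j)"
proof -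
  have "cnj (Pm d e A i j) = (\<Sum>x<d. \<Sum>y<d. e i x * A y x * cnj (e j y))"
  proof -
    have h': "cnj (A x y) = A y x" if "x < d" "y < d" for x y
      using h that by (metis complex_cnj_cnj)
    show ?thesis unfolding Pm_def cnj_sum by (intro sum.cong refl) (simp add: h')
  qed
  also have "\<dots> = Pm d e A j i"
    unfolding Pm_def by (subst sum.swap) (simp add: mult.commute mult.left_commute)
  finally show ?thesis by simp
qed

lemma Pm_diag:
  assumes "is_state d A"
  shows "Pm d e A i i \<in> \<real>" "0 \<le> Re (Pm d e A i i)"
  using assms unfolding is_state_def Pm_def by blast+

lemma sum3_swap:
  "(\<Sum>i\<in>A. \<Sum>x\<in>B. \<Sum>y\<in>C. f i x y) = (\<Sum>x\<in>B. \<Sum>y\<in>C. \<Sum>i\<in>A. (f i x y :: 'a::comm_monoid_add))"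
  by (subst sum.swap, rule sum.cong[OF refl], rule sum.swap)

lemma sum4_swap:
  "(\<Sum>a\<in>A. \<Sum>b\<in>B. \<Sum>i\<in>C. \<Sum>j\<in>D. f a b i j) = (\<Sum>i\<in>C. \<Sum>j\<in>D. \<Sum>a\<in>A. \<Sum>b\<in>B. (f a b i j :: 'a::comm_monoid_add))"
proof -
  have "(\<Sum>a\<in>A. \<Sum>b\<in>B. \<Sum>i\<in>C. \<Sum>j\<in>D. f a b i j) = (\<Sum>a\<in>A. \<Sum>i\<in>C. \<Sum>j\<in>D. \<Sum>b\<in>B. f a b i j)"
    by (rule sum.cong[OF refl], rule sum3_swap)
  also have "\<dots> = (\<Sum>i\<in>C. \<Sum>j\<in>D. \<Sum>a\<in>A. \<Sum>b\<in>B. f a b i j)" by (rule sum3_swap)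
  finally show ?thesis .
qed

lemma Pm_trace:
  assumes st: "is_state d A" and onb: "orthonormal_basis d e"
  shows "(\<Sum>i<d. Pm d e A i i) = 1"
proof -
  have "(\<Sum>i<d. Pm d e A i i) = (\<Sum>i<d. \<Sum>x<d. \<Sum>y<d. A x y * (e i y * cnj (e i x)))"
    unfolding Pm_def by (simp add: mult.commute mult.left_commute)
  also have "\<dots> = (\<Sum>x<d. \<Sum>y<d. \<Sum>i<d. A x y * (e i y * cnj (e i x)))"
    by (rule sum3_swap)
  also have "\<dots> = (\<Sum>x<d. \<Sum>y<d. A x y * (if y = x then 1 else 0))"
    by (intro sum.cong refl) (simp add: onb_complete[OF onb] sum_distrib_left[symmetric])
  also have "\<dots> = mtrace d A"
    by (simp add: mtrace_def if_distrib cong: if_cong)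
  also have "\<dots> = 1" using st unfolding is_state_def by blast
  finally show ?thesis .
qed

lemma Pm_avg:
  "Pm d e (\<lambda>x y. (\<Sum>t<T. B t x y) / of_nat T) i j = (\<Sum>t<T. Pm d e (B t) i j) / of_nat T"
proof -
  have "Pm d e (\<lambda>x y. (\<Sum>t<T. B t x y) / of_nat T) i j
     = (\<Sum>x<d. \<Sum>y<d. \<Sum>t<T. cnj (e i x) * B t x y * e j y / of_nat T)"
    unfolding Pm_def by (intro sum.cong refl) (simp add: sum_distrib_left sum_distrib_right sum_divide_distrib)
  also have "\<dots> = (\<Sum>t<T. \<Sum>x<d. \<Sum>y<d. cnj (e i x) * B t x y * e j y / of_nat T)"
    by (rule sum3_swap[symmetric])
  finally show ?thesis unfolding Pm_def by (simp add: sum_divide_distrib)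
qed

lemma Pm_quad:
  "(\<Sum>x<d. \<Sum>y<d. cnj (a * e i x + b * e j x) * A x y * (a * e i y + b * e j y))
   = cnj a * a * Pm d e A i i + cnj a * b * Pm d e A i j + cnj b * a * Pm d e A j i + cnj b * b * Pm d e A j j"
proof -
  have pt: "\<And>x y. cnj (a * e i x + b * e j x) * A x y * (a * e i y + b * e j y)
     = (cnj a * a) * (cnj (e i x) * A x y * e i y) + (cnj a * b) * (cnj (e i x) * A x y * e j y)
       + (cnj b * a) * (cnj (e j x) * A x y * e i y) + (cnj b * b) * (cnj (e j x) * A x y * e j y)"
    by (simp add: algebra_simps)
  show ?thesis unfolding pt Pm_def by (simp add: sum.distrib sum_distrib_left)
qed


lemma Pm_psd:
  assumes st: "is_state d A"
  shows "(cmod (Pm d e A i j))\<^sup>2 \<le> Re (Pm d e A i i) * Re (Pm d e A j j)"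
proof -
  define z where "z = Pm d e A i j"
  define a where "a = Re (Pm d e A i i)"
  define b where "b = Re (Pm d e A j j)"
  define w where "w = (cmod z)\<^sup>2"
  have h: "\<forall>i<d. \<forall>j<d. A j i = cnj (A i j)" using st unfolding is_state_def by blast
  have zji: "Pm d e A j i = cnj z" unfolding z_def by (rule Pm_herm[OF h])
  have ai: "Pm d e A i i = of_real a" using Pm_diag[OF st] a_def by (simp add: complex_is_Real_iff)
  have bj: "Pm d e A j j = of_real b" using Pm_diag[OF st] b_def by (simp add: complex_is_Real_iff)
  have a0: "0 \<le> a" using Pm_diag[OF st] a_def by simp
  have b0: "0 \<le> b" using Pm_diag[OF st] b_def by simp
  have w0: "0 \<le> w" by (simp add: w_def)
  have Q: "0 \<le> s\<^sup>2 * a - 2 * s * w + w * b" for s :: real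
  proof -
    let ?v = "\<lambda>x. complex_of_real s * e i x + (- cnj z) * e j x"
    have psd: "\<And>v. 0 \<le> Re (\<Sum>i<d. \<Sum>j<d. cnj (v i) * A i j * v j)"
      using st unfolding is_state_def by blast
    have "0 \<le> Re (\<Sum>x<d. \<Sum>y<d. cnj (?v x) * A x y * ?v y)"
      by (rule psd)
    also have "(\<Sum>x<d. \<Sum>y<d. cnj (?v x) * A x y * ?v y)
      = cnj (of_real s) * of_real s * of_real a + cnj (of_real s) * (- cnj z) * z
        + cnj (- cnj z) * of_real s * cnj z + cnj (- cnj z) * (- cnj z) * of_real b"
      by (subst Pm_quad) (simp add: zji ai bj z_def)
    also have "Re \<dots> = s\<^sup>2 * a - 2 * s * w + w * b"
    proof -
      have w2: "w = (Re z)\<^sup>2 + (Im z)\<^sup>2" by (simp add: w_def cmod_power2)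
      show ?thesis by (simp add: w2 power2_eq_square algebra_simps)
    qed
    finally show ?thesis .
  qed
  show ?thesis
  proof (cases "a > 0")
    case True
    have "0 \<le> (w/a)\<^sup>2 * a - 2 * (w/a) * w + w * b" by (rule Q)
    hence "0 \<le> w * (a * b - w) / a" using True by (simp add: field_simps power2_eq_square)
    hence "0 \<le> w * (a * b - w)" using True by (simp add: zero_le_divide_iff)
    hence "w \<le> a * b" using w0 by (cases "w = 0") (use a0 b0 in \<open>auto simp: zero_le_mult_iff\<close>)
    thus ?thesis by (simp add: w_def z_def a_def b_def)
  next
    case False
    hence "a = 0" using a0 by simp
    have "0 \<le> (b+1)\<^sup>2 * a - 2 * (b+1) * w + w * b" by (rule Q)
    hence "w * (b + 2) \<le> 0" using \<open>a = 0\<close> by (simp add: algebra_simps)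
    hence "w = 0" using w0 b0 by (simp add: mult_le_0_iff)
    thus ?thesis using \<open>a = 0\<close> by (simp add: w_def z_def a_def b_def)
  qed
qed


lemma indic_prod:
  "finite A \<Longrightarrow> (\<Prod>u\<in>A. (if P u then 1 else 0 :: complex)) = (if \<forall>u\<in>A. P u then 1 else 0)"
  by (induction A rule: finite_induct) auto

lemma prod_two:
  fixes s t T :: nat
  assumes "s < t" "t < T"
  shows "(\<Prod>u<T. f u) = f s * f t * (\<Prod>u\<in>{..<T} - {s, t}. (f u :: complex))"
proof -
  have "{..<T} = insert s (insert t ({..<T} - {s, t}))" using assms by auto
  hence "(\<Prod>u<T. f u) = (\<Prod>u\<in>insert s (insert t ({..<T} - {s, t})). f u)" by simp
  also have "\<dots> = f s * f t * (\<Prod>u\<in>{..<T} - {s, t}. f u)" using assms by (simp add: mult.assoc)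
  finally show ?thesis .
qed

lemma expect_Cst:
  assumes tr: "\<forall>u<T. mtrace d (\<rho>s u) = 1" and st: "s < t" "t < T"
  shows "expect d T (prod_state T \<rho>s) (Cst d q e s t)
    = (\<Sum>i<d. \<Sum>j<d. Pm d e (\<rho>s s) i j * Pm d e (\<rho>s t) j i / of_real ((q i + q j) / 2))"
proof -
  define h where "h i j u x y = (if u = s then e j y * cnj (e i x) else if u = t then e i y * cnj (e j x)
      else (if y = x then 1 else 0 :: complex))" for i j u x y
  define g where "g i j u x y = \<rho>s u x y * h i j u x y" for i j u x y
  have pt: "prod_state T \<rho>s a b * Cst d q e s t b a
     = (\<Sum>i<d. \<Sum>j<d. (\<Prod>u<T. g i j u (a!u) (b!u)) / of_real ((q i + q j) / 2))"
    if a: "a \<in> multi_idx d T" and b: "b \<in> multi_idx d T" for a b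
  proof -
    have la: "length a = T" and lb: "length b = T" using a b by (auto simp: multi_idx_def)
    have ind: "(if (\<forall>u<length b. u \<noteq> s \<and> u \<noteq> t \<longrightarrow> b ! u = a ! u) then 1 else 0)
        = (\<Prod>u\<in>{..<T} - {s, t}. (if b!u = a!u then 1 else 0 :: complex))"
      by (subst indic_prod) (auto simp: lb)
    have hprod: "(\<Prod>u<T. h i j u (a!u) (b!u))
       = e j (b!s) * e i (b!t) * cnj (e i (a!s)) * cnj (e j (a!t))
         * (\<Prod>u\<in>{..<T} - {s, t}. (if b!u = a!u then 1 else 0 :: complex))" for i j
    proof -
      have "(\<Prod>u\<in>{..<T} - {s, t}. h i j u (a!u) (b!u))
          = (\<Prod>u\<in>{..<T} - {s, t}. (if b!u = a!u then 1 else 0 :: complex))"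
        by (rule prod.cong) (auto simp: h_def)
      thus ?thesis using st by (subst prod_two[OF st]) (simp add: h_def)
    qed
    have "prod_state T \<rho>s a b * Cst d q e s t b a
       = (\<Sum>i<d. \<Sum>j<d. prod_state T \<rho>s a b * (\<Prod>u<T. h i j u (a!u) (b!u)) / of_real ((q i + q j) / 2))"
      unfolding Cst_def Cop_def ind hprod
      by (simp add: sum_distrib_left sum_distrib_right sum_divide_distrib mult.commute mult.left_commute mult.assoc)
    also have "\<dots> = (\<Sum>i<d. \<Sum>j<d. (\<Prod>u<T. g i j u (a!u) (b!u)) / of_real ((q i + q j) / 2))"
      by (simp add: g_def prod.distrib prod_state_def)
    finally show ?thesis .
  qed
  have "expect d T (prod_state T \<rho>s) (Cst d q e s t)
     = (\<Sum>a\<in>multi_idx d T. \<Sum>b\<in>multi_idx d T. \<Sum>i<d. \<Sum>j<d. (\<Prod>u<T. g i j u (a!u) (b!u)) / of_real ((q i + q j) / 2))"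
    unfolding expect_def by (intro sum.cong refl) (simp add: pt)
  also have "\<dots> = (\<Sum>i<d. \<Sum>j<d. (\<Sum>a\<in>multi_idx d T. \<Sum>b\<in>multi_idx d T. \<Prod>u<T. g i j u (a!u) (b!u)) / of_real ((q i + q j) / 2))"
    unfolding sum_divide_distrib by (rule sum4_swap)
  also have "\<dots> = (\<Sum>i<d. \<Sum>j<d. (\<Prod>u<T. \<Sum>x<d. \<Sum>y<d. g i j u x y) / of_real ((q i + q j) / 2))"
    by (simp add: multi_sum2)
  also have "\<dots> = (\<Sum>i<d. \<Sum>j<d. Pm d e (\<rho>s s) i j * Pm d e (\<rho>s t) j i / of_real ((q i + q j) / 2))"
  proof (intro sum.cong refl)
    fix i j
    have rest: "(\<Prod>u\<in>{..<T} - {s, t}. \<Sum>x<d. \<Sum>y<d. g i j u x y) = 1"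
    proof (rule prod.neutral, intro ballI)
      fix u assume u: "u \<in> {..<T} - {s, t}"
      have "(\<Sum>x<d. \<Sum>y<d. g i j u x y) = (\<Sum>x<d. \<Sum>y<d. \<rho>s u x y * (if y = x then 1 else 0))"
        using u by (intro sum.cong refl) (auto simp: g_def h_def)
      also have "\<dots> = mtrace d (\<rho>s u)"
        by (simp add: mtrace_def if_distrib cong: if_cong)
      finally show "(\<Sum>x<d. \<Sum>y<d. g i j u x y) = 1" using tr u by simp
    qed
    have gs: "(\<Sum>x<d. \<Sum>y<d. g i j s x y) = Pm d e (\<rho>s s) i j"
      unfolding Pm_def g_def h_def by (intro sum.cong refl) (simp add: mult.commute mult.left_commute)
    have gt: "(\<Sum>x<d. \<Sum>y<d. g i j t x y) = Pm d e (\<rho>s t) j i"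
      unfolding Pm_def g_def h_def using st by (intro sum.cong refl) (simp add: mult.commute mult.left_commute)
    show "(\<Prod>u<T. \<Sum>x<d. \<Sum>y<d. g i j u x y) / of_real ((q i + q j) / 2)
        = Pm d e (\<rho>s s) i j * Pm d e (\<rho>s t) j i / of_real ((q i + q j) / 2)"
      by (subst prod_two[OF st]) (simp add: rest gs gt)
  qed
  finally show ?thesis .
qed


lemma expect_id:
  assumes tr: "\<forall>u<T. mtrace d (\<rho>s u) = 1"
  shows "expect d T (prod_state T \<rho>s) (\<lambda>a b. if a = b then 1 else 0) = 1"
proof -
  have pt: "prod_state T \<rho>s a b * (if b = a then 1 else 0)
      = (\<Prod>u<T. \<rho>s u (a!u) (b!u) * (if b!u = a!u then 1 else 0))"
    if a: "a \<in> multi_idx d T" and b: "b \<in> multi_idx d T" for a b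
  proof -
    have la: "length a = T" and lb: "length b = T" using a b by (auto simp: multi_idx_def)
    have "(b = a) = (\<forall>u\<in>{..<T}. b!u = a!u)" using la lb by (auto simp: list_eq_iff_nth_eq)
    hence "(if b = a then 1 else 0) = (\<Prod>u<T. (if b!u = a!u then 1 else 0 :: complex))"
      by (simp add: indic_prod)
    thus ?thesis by (simp add: prod_state_def prod.distrib)
  qed
  have "expect d T (prod_state T \<rho>s) (\<lambda>a b. if a = b then 1 else 0)
      = (\<Sum>a\<in>multi_idx d T. \<Sum>b\<in>multi_idx d T. \<Prod>u<T. \<rho>s u (a!u) (b!u) * (if b!u = a!u then 1 else 0))"
    unfolding expect_def by (intro sum.cong refl) (simp add: pt)
  also have "\<dots> = (\<Prod>u<T. \<Sum>x<d. \<Sum>y<d. \<rho>s u x y * (if y = x then 1 else 0))"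
    by (rule multi_sum2)
  also have "\<dots> = (\<Prod>u<T. mtrace d (\<rho>s u))"
    by (simp add: mtrace_def if_distrib cong: if_cong)
  also have "\<dots> = 1" using tr by simp
  finally show ?thesis .
qed



lemma CS_sum:
  fixes a b :: "nat \<Rightarrow> real"
  shows "(\<Sum>i\<in>A. a i * b i)\<^sup>2 \<le> (\<Sum>i\<in>A. (a i)\<^sup>2) * (\<Sum>i\<in>A. (b i)\<^sup>2)"
proof -
  have "0 \<le> (\<Sum>i\<in>A. \<Sum>j\<in>A. (a i * b j - a j * b i)\<^sup>2)" by (intro sum_nonneg) auto
  also have "(\<Sum>i\<in>A. \<Sum>j\<in>A. (a i * b j - a j * b i)\<^sup>2)
     = (\<Sum>i\<in>A. \<Sum>j\<in>A. (a i)\<^sup>2 * (b j)\<^sup>2) + (\<Sum>i\<in>A. \<Sum>j\<in>A. (a j)\<^sup>2 * (b i)\<^sup>2)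
       - 2 * (\<Sum>i\<in>A. \<Sum>j\<in>A. (a i * b i) * (a j * b j))"
    by (simp add: power2_eq_square algebra_simps sum.distrib sum_subtractf sum_distrib_left)
  also have "\<dots> = 2 * ((\<Sum>i\<in>A. (a i)\<^sup>2) * (\<Sum>i\<in>A. (b i)\<^sup>2) - (\<Sum>i\<in>A. a i * b i)\<^sup>2)"
  proof -
    have f1: "(\<Sum>i\<in>A. \<Sum>j\<in>A. (a i)\<^sup>2 * (b j)\<^sup>2) = (\<Sum>i\<in>A. (a i)\<^sup>2) * (\<Sum>i\<in>A. (b i)\<^sup>2)"
      by (simp only: sum_product)
    have f2: "(\<Sum>i\<in>A. \<Sum>j\<in>A. (a j)\<^sup>2 * (b i)\<^sup>2) = (\<Sum>i\<in>A. (a i)\<^sup>2) * (\<Sum>i\<in>A. (b i)\<^sup>2)"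
      by (subst sum.swap) (rule f1)
    have f3: "(\<Sum>i\<in>A. \<Sum>j\<in>A. (a i * b i) * (a j * b j)) = (\<Sum>i\<in>A. a i * b i)\<^sup>2"
      by (simp only: sum_product power2_eq_square)
    show ?thesis unfolding f1 f2 f3 by (simp add: algebra_simps)
  qed
  finally show ?thesis by simp
qed

lemma CS_sqrt:
  fixes x q :: "nat \<Rightarrow> real"
  assumes q: "\<forall>i\<in>A. q i > 0"
  shows "(\<Sum>i\<in>A. x i / q i) \<le> sqrt (\<Sum>i\<in>A. (x i)\<^sup>2 / q i) * sqrt (\<Sum>i\<in>A. 1 / q i)"
proof -
  have e: "(\<Sum>i\<in>A. x i / q i) = (\<Sum>i\<in>A. (x i / sqrt (q i)) * (1 / sqrt (q i)))"
  proof (intro sum.cong refl)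
    fix i assume "i \<in> A" hence "q i > 0" using q by simp
    hence "sqrt (q i) * sqrt (q i) = q i" by simp
    thus "x i / q i = x i / sqrt (q i) * (1 / sqrt (q i))" by simp
  qed
  have sq: "(sqrt (q i))\<^sup>2 = q i" if "i \<in> A" for i
  proof -
    have "0 \<le> q i" using q that by (simp add: less_imp_le)
    thus ?thesis by simp
  qed
  have e1: "(\<Sum>i\<in>A. (x i / sqrt (q i))\<^sup>2) = (\<Sum>i\<in>A. (x i)\<^sup>2 / q i)"
    by (intro sum.cong refl) (simp add: power_divide sq)
  have e2: "(\<Sum>i\<in>A. (1 / sqrt (q i))\<^sup>2) = (\<Sum>i\<in>A. 1 / q i)"
    by (intro sum.cong refl) (simp add: power_divide sq)
  have "(\<Sum>i\<in>A. x i / q i) \<le> sqrt ((\<Sum>i\<in>A. x i / q i)\<^sup>2)" by simp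
  also have "\<dots> \<le> sqrt ((\<Sum>i\<in>A. (x i)\<^sup>2 / q i) * (\<Sum>i\<in>A. 1 / q i))"
    using CS_sum[of "\<lambda>i. x i / sqrt (q i)" "\<lambda>i. 1 / sqrt (q i)" A] unfolding e e1 e2
    by (rule real_sqrt_le_mono)
  finally show ?thesis by (simp add: real_sqrt_mult)
qed


lemma final_real:
  fixes d T :: nat and q :: "nat \<Rightarrow> real" and p :: "nat \<Rightarrow> nat \<Rightarrow> real" and n :: "nat \<Rightarrow> real"
    and \<mu> \<gamma> :: real
  assumes T2: "T \<ge> 2" and qpos: "\<forall>i<d. q i > 0" and g0: "0 < \<gamma>" and gq: "\<forall>i<d. \<gamma> \<le> q i"
    and qs: "(\<Sum>i<d. q i) = 1"
    and p0: "\<forall>t<T. \<forall>i<d. 0 \<le> p t i" and ps: "\<forall>t<T. (\<Sum>i<d. p t i) = 1"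
    and nlo: "\<forall>t<T. (\<Sum>i<d. (p t i)\<^sup>2 / q i) \<le> n t"
    and nhi: "\<forall>t<T. n t \<le> (\<Sum>i<d. \<Sum>j<d. 2 / (q i + q j) * (p t i * p t j))"
    and mu: "(\<Sum>i<d. ((\<Sum>t<T. p t i) / T)\<^sup>2 / q i) - 1 \<le> \<mu>"
  shows "\<bar>1 / T - (\<Sum>t<T. n t) / (real T)\<^sup>2\<bar> \<le> sqrt (d / (\<gamma> * T)) * sqrt \<mu> + (real d - 1) / T"
proof -
  have Tpos: "real T > 0" using T2 by simp
  have sq_expand: "(\<Sum>i<d. (x i - q i)\<^sup>2 / q i) = (\<Sum>i<d. (x i)\<^sup>2 / q i) - 2 * (\<Sum>i<d. x i) + 1" for x
  proof -
    have "(\<Sum>i<d. (x i - q i)\<^sup>2 / q i) = (\<Sum>i<d. (x i)\<^sup>2 / q i - 2 * x i + q i)"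
    proof (intro sum.cong refl)
      fix i assume "i \<in> {..<d}" hence qi: "q i > 0" using qpos by auto
      have "(x i - q i)\<^sup>2 = (x i)\<^sup>2 - 2 * x i * q i + q i * q i" by (simp add: power2_eq_square algebra_simps)
      thus "(x i - q i)\<^sup>2 / q i = (x i)\<^sup>2 / q i - 2 * x i + q i"
        using qi by (simp add: diff_divide_distrib add_divide_distrib)
    qed
    thus ?thesis using qs by (simp add: sum.distrib sum_subtractf sum_distrib_left)
  qed
  have A: "1 \<le> n t" if t: "t < T" for t
  proof -
    have "0 \<le> (\<Sum>i<d. (p t i - q i)\<^sup>2 / q i)" using qpos by (intro sum_nonneg) auto
    thus ?thesis using sq_expand[of "p t"] ps nlo t by auto
  qed
  have B: "n t \<le> (\<Sum>i<d. p t i / q i)" if t: "t < T" for t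
  proof -
    have "n t \<le> (\<Sum>i<d. \<Sum>j<d. 2 / (q i + q j) * (p t i * p t j))" using nhi t by auto
    also have "\<dots> \<le> (\<Sum>i<d. \<Sum>j<d. ((1 / q i + 1 / q j) / 2) * (p t i * p t j))"
    proof (intro sum_mono mult_right_mono)
      fix i j assume i: "i \<in> {..<d}" and j: "j \<in> {..<d}"
      have qi: "q i > 0" and qj: "q j > 0" using i j qpos by auto
      have "0 \<le> (q i - q j)\<^sup>2" by simp
      thus "2 / (q i + q j) \<le> (1 / q i + 1 / q j) / 2"
        using qi qj by (simp add: field_simps power2_eq_square)
      show "0 \<le> p t i * p t j" using p0 t i j by auto
    qed
    also have "\<dots> = ((\<Sum>i<d. \<Sum>j<d. p t i / q i * p t j) + (\<Sum>i<d. \<Sum>j<d. p t i * (p t j / q j))) / 2"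
    proof -
      have "(\<Sum>i<d. \<Sum>j<d. ((1 / q i + 1 / q j) / 2) * (p t i * p t j))
          = (\<Sum>i<d. \<Sum>j<d. (p t i / q i * p t j + p t i * (p t j / q j)) / 2)"
        by (intro sum.cong refl) (simp add: field_simps)
      thus ?thesis by (simp only: sum_divide_distrib[symmetric] sum.distrib)
    qed
    also have "\<dots> = ((\<Sum>i<d. p t i / q i) * (\<Sum>j<d. p t j) + (\<Sum>i<d. p t i) * (\<Sum>j<d. p t j / q j)) / 2"
      by (simp only: sum_product)
    also have "\<dots> = (\<Sum>i<d. p t i / q i)" using ps t by simp
    finally show ?thesis .
  qed
  define pb where "pb i = (\<Sum>t<T. p t i) / T" for i
  have pbs: "(\<Sum>i<d. pb i) = 1"
  proof -
    have "(\<Sum>i<d. pb i) = (\<Sum>t<T. \<Sum>i<d. p t i) / T"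
      unfolding pb_def by (simp add: sum_divide_distrib[symmetric] sum.swap[of _ "{..<d}"])
    also have "\<dots> = 1" using ps Tpos by simp
    finally show ?thesis .
  qed
  have D: "(\<Sum>i<d. (pb i - q i)\<^sup>2 / q i) \<le> \<mu>"
    using sq_expand[of pb] pbs mu unfolding pb_def by simp
  have mu0: "0 \<le> \<mu>"
  proof -
    have "0 \<le> (\<Sum>i<d. (pb i - q i)\<^sup>2 / q i)" using qpos by (intro sum_nonneg) auto
    thus ?thesis using D by simp
  qed
  have invq: "(\<Sum>i<d. 1 / q i) \<le> d / \<gamma>"
  proof -
    have "(\<Sum>i<d. 1 / q i) \<le> (\<Sum>i<d. 1 / \<gamma>)"
      by (intro sum_mono) (use qpos gq g0 in \<open>auto simp: frac_le\<close>)
    thus ?thesis by simp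
  qed
  define X where "X = (\<Sum>i<d. (pb i - q i) / q i)"
  have X: "X \<le> sqrt \<mu> * sqrt (d / \<gamma>)"
  proof -
    have "X \<le> sqrt (\<Sum>i<d. (pb i - q i)\<^sup>2 / q i) * sqrt (\<Sum>i<d. 1 / q i)"
      unfolding X_def by (rule CS_sqrt) (use qpos in auto)
    also have "\<dots> \<le> sqrt \<mu> * sqrt (d / \<gamma>)"
      by (intro mult_mono real_sqrt_le_mono D invq) (use mu0 qpos in \<open>auto intro!: sum_nonneg simp: less_imp_le\<close>)
    finally show ?thesis .
  qed
  have C: "(\<Sum>t<T. \<Sum>i<d. p t i / q i) = T * (X + d - 1) + T"
  proof -
    have "T * (\<Sum>i<d. pb i / q i) = (\<Sum>i<d. (\<Sum>t<T. p t i) / q i)"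
      unfolding pb_def sum_distrib_left by (intro sum.cong refl) (use Tpos in simp)
    also have "\<dots> = (\<Sum>i<d. \<Sum>t<T. p t i / q i)" by (simp add: sum_divide_distrib)
    also have "\<dots> = (\<Sum>t<T. \<Sum>i<d. p t i / q i)" by (rule sum.swap)
    finally have "(\<Sum>t<T. \<Sum>i<d. p t i / q i) = T * (\<Sum>i<d. pb i / q i)" by simp
    also have "(\<Sum>i<d. pb i / q i) = X + d"
    proof -
      have "(\<Sum>i<d. pb i / q i) = (\<Sum>i<d. (pb i - q i) / q i + 1)"
      proof (intro sum.cong refl)
        fix i assume "i \<in> {..<d}" hence "q i > 0" using qpos by simp
        thus "pb i / q i = (pb i - q i) / q i + 1" by (simp add: diff_divide_distrib)
      qed
      thus ?thesis unfolding X_def by (simp add: sum.distrib)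
    qed
    finally show ?thesis by (simp add: algebra_simps)
  qed
  have lo: "real T \<le> (\<Sum>t<T. n t)"
    using sum_mono[of "{..<T}" "\<lambda>_. 1" n] A by simp
  have hi: "(\<Sum>t<T. n t) \<le> T * (X + d - 1) + T"
    using sum_mono[of "{..<T}" n "\<lambda>t. \<Sum>i<d. p t i / q i"] B C by simp
  have "\<bar>1 / T - (\<Sum>t<T. n t) / (real T)\<^sup>2\<bar> = ((\<Sum>t<T. n t) - T) / (real T)\<^sup>2"
  proof -
    have "1 / T - (\<Sum>t<T. n t) / (real T)\<^sup>2 = - (((\<Sum>t<T. n t) - T) / (real T)\<^sup>2)"
      using Tpos by (simp add: field_simps power2_eq_square)
    moreover have "0 \<le> ((\<Sum>t<T. n t) - T) / (real T)\<^sup>2" using lo by simp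
    ultimately show ?thesis by (simp only: abs_minus_cancel abs_of_nonneg)
  qed
  also have "\<dots> \<le> (T * (X + d - 1)) / (real T)\<^sup>2"
    using hi Tpos by (intro divide_right_mono) auto
  also have "\<dots> = X / T + (real d - 1) / T"
    using Tpos by (simp add: field_simps power2_eq_square)
  also have "X / T \<le> sqrt (d / (\<gamma> * T)) * sqrt \<mu>"
  proof -
    have "X / T \<le> sqrt \<mu> * sqrt (d / \<gamma>) / T" using X Tpos by (simp add: divide_right_mono)
    also have "\<dots> \<le> sqrt \<mu> * sqrt (d / \<gamma>) / sqrt T"
    proof (rule divide_left_mono)
      have "sqrt T \<le> sqrt (T * T)" using T2 by (intro real_sqrt_le_mono) simp
      thus "sqrt T \<le> T" by simp
      show "0 \<le> sqrt \<mu> * sqrt (d / \<gamma>)" using mu0 g0 by simp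
      show "0 < real T * sqrt (real T)" using Tpos by simp
    qed
    also have "\<dots> = sqrt (d / (\<gamma> * T)) * sqrt \<mu>"
      by (simp add: real_sqrt_divide real_sqrt_mult)
    finally show ?thesis .
  qed
  finally show ?thesis by simp
qed

lemma sum_dep_swap:
  "(\<Sum>a\<in>A. \<Sum>t\<in>C. \<Sum>s\<in>D t. f a t s) = (\<Sum>t\<in>C. \<Sum>s\<in>D t. \<Sum>a\<in>A. (f a t s :: 'a::comm_monoid_add))"
  by (subst sum.swap, rule sum.cong[OF refl], rule sum.swap)

lemma expect_Mop:
  "expect d T R (Mop d q e T) = complex_of_real ((real T - 1) / real T) *
     (complex_of_real (1 / real (T choose 2)) * (\<Sum>t<T. \<Sum>s<t. expect d T R (Cst d q e s t))
      - expect d T R (\<lambda>a b. if a = b then 1 else 0))"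
proof -
  define c1 where "c1 = complex_of_real ((real T - 1) / real T)"
  define c2 where "c2 = complex_of_real (1 / real (T choose 2))"
  have e1: "R a b * Mop d q e T b a =
      c1 * (c2 * (\<Sum>t<T. \<Sum>s<t. R a b * Cst d q e s t b a) - R a b * (if b = a then 1 else 0))" for a b
  proof -
    have "R a b * Mop d q e T b a = c1 * (c2 * (R a b * (\<Sum>t<T. \<Sum>s<t. Cst d q e s t b a)) - R a b * (if b = a then 1 else 0))"
      unfolding Mop_def c1_def[symmetric] c2_def[symmetric] by (simp only: ring_distribs mult.left_commute)
    thus ?thesis by (simp only: sum_distrib_left)
  qed
  have "expect d T R (Mop d q e T) = (\<Sum>a\<in>multi_idx d T. \<Sum>b\<in>multi_idx d T.
      c1 * (c2 * (\<Sum>t<T. \<Sum>s<t. R a b * Cst d q e s t b a) - R a b * (if b = a then 1 else 0)))"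
    unfolding expect_def e1 ..
  also have "\<dots> = c1 * (c2 * (\<Sum>a\<in>multi_idx d T. \<Sum>b\<in>multi_idx d T. \<Sum>t<T. \<Sum>s<t. R a b * Cst d q e s t b a)
      - (\<Sum>a\<in>multi_idx d T. \<Sum>b\<in>multi_idx d T. R a b * (if b = a then 1 else 0)))"
    by (simp only: sum_distrib_left sum_subtractf right_diff_distrib)
  also have "(\<Sum>a\<in>multi_idx d T. \<Sum>b\<in>multi_idx d T. \<Sum>t<T. \<Sum>s<t. R a b * Cst d q e s t b a)
      = (\<Sum>t<T. \<Sum>s<t. expect d T R (Cst d q e s t))"
  proof -
    have "(\<Sum>a\<in>multi_idx d T. \<Sum>b\<in>multi_idx d T. \<Sum>t<T. \<Sum>s<t. R a b * Cst d q e s t b a)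
       = (\<Sum>a\<in>multi_idx d T. \<Sum>t<T. \<Sum>s<t. \<Sum>b\<in>multi_idx d T. R a b * Cst d q e s t b a)"
      by (rule sum.cong[OF refl], rule sum_dep_swap)
    also have "\<dots> = (\<Sum>t<T. \<Sum>s<t. \<Sum>a\<in>multi_idx d T. \<Sum>b\<in>multi_idx d T. R a b * Cst d q e s t b a)"
      by (rule sum_dep_swap)
    finally show ?thesis unfolding expect_def .
  qed
  also have "(\<Sum>a\<in>multi_idx d T. \<Sum>b\<in>multi_idx d T. R a b * (if b = a then 1 else 0))
      = expect d T R (\<lambda>a b. if a = b then 1 else 0)"
    unfolding expect_def by (intro sum.cong refl)
  finally show ?thesis unfolding c1_def c2_def .
qed


lemma sq_sum_cnj:
  fixes z :: "nat \<Rightarrow> complex"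
  shows "(\<Sum>t<T. z t) * cnj (\<Sum>t<T. z t)
     = (\<Sum>t<T. z t * cnj (z t)) + (\<Sum>t<T. \<Sum>s<t. z s * cnj (z t) + cnj (z s) * z t)"
proof (induction T)
  case 0 show ?case by simp
next
  case (Suc T)
  define S where "S = (\<Sum>t<T. z t)"
  have e1: "(\<Sum>t<Suc T. z t) * cnj (\<Sum>t<Suc T. z t)
      = S * cnj S + z T * cnj (z T) + (S * cnj (z T) + cnj S * z T)"
    by (simp add: S_def algebra_simps)
  have e2: "(\<Sum>s<T. z s * cnj (z T) + cnj (z s) * z T) = S * cnj (z T) + cnj S * z T"
    by (simp add: S_def sum.distrib sum_distrib_right)
  have r: "(\<Sum>t<Suc T. z t * cnj (z t)) + (\<Sum>t<Suc T. \<Sum>s<t. z s * cnj (z t) + cnj (z s) * z t)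
     = ((\<Sum>t<T. z t * cnj (z t)) + (\<Sum>t<T. \<Sum>s<t. z s * cnj (z t) + cnj (z s) * z t))
       + z T * cnj (z T) + (\<Sum>s<T. z s * cnj (z T) + cnj (z s) * z T)"
    by (simp only: sum.lessThan_Suc add_ac)
  show ?case unfolding e1 r Suc.IH[folded S_def, symmetric] e2 ..
qed

lemma cross_sum:
  fixes Z :: "nat \<Rightarrow> nat \<Rightarrow> nat \<Rightarrow> complex" and q :: "nat \<Rightarrow> real"
  assumes herm: "\<And>t i j. t < T \<Longrightarrow> Z t j i = cnj (Z t i j)"
  shows "2 * (\<Sum>t<T. \<Sum>s<t. \<Sum>i<d. \<Sum>j<d. Z s i j * Z t j i / of_real ((q i + q j) / 2))
    = of_real (\<Sum>i<d. \<Sum>j<d. 2 / (q i + q j) * ((cmod (\<Sum>t<T. Z t i j))\<^sup>2 - (\<Sum>t<T. (cmod (Z t i j))\<^sup>2)))"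
proof -
  define w where "w i j = 2 / (q i + q j)" for i j
  define c where "c i j = (\<Sum>t<T. \<Sum>s<t. Z s i j * cnj (Z t i j))" for i j
  have w_sym: "w i j = w j i" for i j by (simp add: w_def add.commute)
  have trm: "Z s i j * Z t j i / of_real ((q i + q j) / 2) = of_real (w i j) * (Z s i j * cnj (Z t i j))"
    if "t < T" for s t i j
  proof -
    have "Z s i j * Z t j i / of_real ((q i + q j) / 2) = (Z s i j * cnj (Z t i j)) / of_real ((q i + q j) / 2)"
    proof -
      have h: "Z t j i = cnj (Z t i j)" by (rule herm[OF that])
      show ?thesis by (simp only: h)
    qed
    also have "\<dots> = of_real (inverse ((q i + q j) / 2)) * (Z s i j * cnj (Z t i j))"
      by (metis divide_inverse mult.commute of_real_inverse)
    also have "of_real (inverse ((q i + q j) / 2)) = (of_real (w i j) :: complex)"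
      by (simp add: w_def)
    finally show ?thesis .
  qed
  have "(\<Sum>t<T. \<Sum>s<t. \<Sum>i<d. \<Sum>j<d. Z s i j * Z t j i / of_real ((q i + q j) / 2))
      = (\<Sum>t<T. \<Sum>s<t. \<Sum>i<d. \<Sum>j<d. of_real (w i j) * (Z s i j * cnj (Z t i j)))"
    by (intro sum.cong refl) (rule trm, simp)
  also have "\<dots> = (\<Sum>i<d. \<Sum>t<T. \<Sum>s<t. \<Sum>j<d. of_real (w i j) * (Z s i j * cnj (Z t i j)))"
    by (rule sum_dep_swap[symmetric])
  also have "\<dots> = (\<Sum>i<d. \<Sum>j<d. \<Sum>t<T. \<Sum>s<t. of_real (w i j) * (Z s i j * cnj (Z t i j)))"
    by (rule sum.cong[OF refl], rule sum_dep_swap[symmetric])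
  also have "\<dots> = (\<Sum>i<d. \<Sum>j<d. of_real (w i j) * c i j)"
    by (simp add: c_def sum_distrib_left)
  finally have S1: "(\<Sum>t<T. \<Sum>s<t. \<Sum>i<d. \<Sum>j<d. Z s i j * Z t j i / of_real ((q i + q j) / 2))
      = (\<Sum>i<d. \<Sum>j<d. of_real (w i j) * c i j)" .
  have S2: "(\<Sum>i<d. \<Sum>j<d. of_real (w i j) * c i j) = (\<Sum>i<d. \<Sum>j<d. of_real (w i j) * c j i)"
    by (subst sum.swap) (simp add: w_sym)
  have cc: "c i j + c j i = of_real ((cmod (\<Sum>t<T. Z t i j))\<^sup>2 - (\<Sum>t<T. (cmod (Z t i j))\<^sup>2))" for i j
  proof -
    have "c j i = (\<Sum>t<T. \<Sum>s<t. cnj (Z s i j) * Z t i j)"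
      unfolding c_def
    proof (intro sum.cong refl)
      fix t s assume "t \<in> {..<T}" "s \<in> {..<t}"
      hence "t < T" "s < T" by auto
      thus "Z s j i * cnj (Z t j i) = cnj (Z s i j) * Z t i j"
        using herm[of s i j] herm[of t i j] by simp
    qed
    hence "c i j + c j i = (\<Sum>t<T. \<Sum>s<t. Z s i j * cnj (Z t i j) + cnj (Z s i j) * Z t i j)"
      by (simp add: c_def sum.distrib)
    also have "\<dots> = (\<Sum>t<T. Z t i j) * cnj (\<Sum>t<T. Z t i j) - (\<Sum>t<T. Z t i j * cnj (Z t i j))"
      unfolding sq_sum_cnj[of "\<lambda>t. Z t i j" T] by simp
    also have "\<dots> = of_real ((cmod (\<Sum>t<T. Z t i j))\<^sup>2 - (\<Sum>t<T. (cmod (Z t i j))\<^sup>2))"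
    proof -
      have nz: "\<And>z. z * cnj z = complex_of_real ((cmod z)\<^sup>2)" by (rule complex_norm_square[symmetric])
      show ?thesis by (simp only: nz of_real_diff of_real_sum)
    qed
    finally show ?thesis .
  qed
  have "2 * (\<Sum>i<d. \<Sum>j<d. of_real (w i j) * c i j)
      = (\<Sum>i<d. \<Sum>j<d. of_real (w i j) * c i j) + (\<Sum>i<d. \<Sum>j<d. of_real (w i j) * c j i)"
    using S2 by simp
  also have "\<dots> = (\<Sum>i<d. \<Sum>j<d. of_real (w i j) * (c i j + c j i))"
    by (simp add: sum.distrib[symmetric] distrib_left)
  also have "\<dots> = of_real (\<Sum>i<d. \<Sum>j<d. 2 / (q i + q j) * ((cmod (\<Sum>t<T. Z t i j))\<^sup>2 - (\<Sum>t<T. (cmod (Z t i j))\<^sup>2)))"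
    by (simp add: cc w_def)
  finally show ?thesis using S1 by simp
qed

lemma choose2_real: "real (T choose 2) = real T * (real T - 1) / 2"
proof (induction T)
  case 0 thus ?case by simp
next
  case (Suc T)
  have "Suc T choose 2 = T + (T choose 2)"
    by (simp add: numeral_2_eq_2)
  thus ?case using Suc.IH by (simp add: field_simps)
qed


theorem proposition8p6:
  fixes d T :: nat
    and \<sigma> :: "nat \<Rightarrow> nat \<Rightarrow> complex"
    and q :: "nat \<Rightarrow> real"
    and e :: "nat \<Rightarrow> nat \<Rightarrow> complex"
    and \<rho>s :: "nat \<Rightarrow> nat \<Rightarrow> nat \<Rightarrow> complex"
  assumes sigma_state: "is_state d \<sigma>"
    and onb: "orthonormal_basis d e"
    and eig: "\<forall>x<d. \<forall>y<d. \<sigma> x y = (\<Sum>i<d. complex_of_real (q i) * e i x * cnj (e i y))"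
    and full_rank: "\<forall>i<d. q i > 0"
    and T2: "T \<ge> 2"
    and states: "\<forall>t<T. is_state d (\<rho>s t)"
  shows "cmod (expect d T (prod_state T \<rho>s) (Mop d q e T)
               - complex_of_real (chi2_div d q e (\<lambda>x y. (\<Sum>t<T. \<rho>s t x y) / of_nat T)))
         \<le> sqrt (real d / (Min (q ` {..<d}) * real T))
             * sqrt (chi2_div d q e (\<lambda>x y. (\<Sum>t<T. \<rho>s t x y) / of_nat T))
           + (real d - 1) / real T"
proof -
  have Tpos: "real T > 0" using T2 by simp
  have tr: "\<forall>u<T. mtrace d (\<rho>s u) = 1" using states unfolding is_state_def by blast
  have hermu: "\<forall>i<d. \<forall>j<d. \<rho>s t j i = cnj (\<rho>s t i j)" if "t < T" for t
    using states that unfolding is_state_def by blast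
  define Z where "Z t i j = Pm d e (\<rho>s t) i j" for t i j
  have Zh: "Z t j i = cnj (Z t i j)" if "t < T" for t i j
    unfolding Z_def by (rule Pm_herm[OF hermu[OF that]])
  define p where "p t i = Re (Z t i i)" for t i
  have Zr: "Z t i i = of_real (p t i)" if "t < T" for t i
    using Pm_diag(1)[of d "\<rho>s t" e i] states that by (simp add: p_def Z_def complex_is_Real_iff)
  define \<mu> where "\<mu> = chi2_div d q e (\<lambda>x y. (\<Sum>t<T. \<rho>s t x y) / of_nat T)"
  define n where "n t = (\<Sum>i<d. \<Sum>j<d. 2 / (q i + q j) * (cmod (Z t i j))\<^sup>2)" for t
  define N where "N = (\<Sum>i<d. \<Sum>j<d. 2 / (q i + q j) * (cmod (\<Sum>t<T. Z t i j))\<^sup>2)"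
  have mu_eq: "\<mu> = N / (real T)\<^sup>2 - 1"
  proof -
    have "\<mu> = (\<Sum>i<d. \<Sum>j<d. 2 / (q i + q j) * (cmod (Pm d e (\<lambda>x y. (\<Sum>t<T. \<rho>s t x y) / of_nat T) i j))\<^sup>2) - 1"
      unfolding \<mu>_def chi2_div_def Pm_def ..
    also have "\<dots> = (\<Sum>i<d. \<Sum>j<d. 2 / (q i + q j) * (cmod (\<Sum>t<T. Z t i j))\<^sup>2 / (real T)\<^sup>2) - 1"
      unfolding Pm_avg Z_def by (simp add: norm_divide power_divide)
    also have "\<dots> = N / (real T)\<^sup>2 - 1"
      unfolding N_def by (simp add: sum_divide_distrib)
    finally show ?thesis .
  qed
  have cross: "(\<Sum>t<T. \<Sum>s<t. expect d T (prod_state T \<rho>s) (Cst d q e s t))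
      = of_real ((N - (\<Sum>t<T. n t)) / 2)"
  proof -
    have c1: "(\<Sum>t<T. \<Sum>s<t. expect d T (prod_state T \<rho>s) (Cst d q e s t))
      = (\<Sum>t<T. \<Sum>s<t. \<Sum>i<d. \<Sum>j<d. Z s i j * Z t j i / of_real ((q i + q j) / 2))"
      unfolding Z_def by (intro sum.cong refl) (simp add: expect_Cst[OF tr])
    moreover have c2: "2 * (\<Sum>t<T. \<Sum>s<t. \<Sum>i<d. \<Sum>j<d. Z s i j * Z t j i / of_real ((q i + q j) / 2))
      = of_real (\<Sum>i<d. \<Sum>j<d. 2 / (q i + q j) * ((cmod (\<Sum>t<T. Z t i j))\<^sup>2 - (\<Sum>t<T. (cmod (Z t i j))\<^sup>2)))"
      by (rule cross_sum) (rule Zh)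
    moreover have c3: "(\<Sum>i<d. \<Sum>j<d. 2 / (q i + q j) * ((cmod (\<Sum>t<T. Z t i j))\<^sup>2 - (\<Sum>t<T. (cmod (Z t i j))\<^sup>2)))
       = N - (\<Sum>t<T. n t)"
    proof -
      have "(\<Sum>t<T. n t) = (\<Sum>i<d. \<Sum>j<d. \<Sum>t<T. 2 / (q i + q j) * (cmod (Z t i j))\<^sup>2)"
        unfolding n_def by (rule sum3_swap)
      thus ?thesis unfolding N_def
        by (simp add: right_diff_distrib sum_subtractf sum_distrib_left)
    qed
    ultimately have X2: "2 * (\<Sum>t<T. \<Sum>s<t. \<Sum>i<d. \<Sum>j<d. Z s i j * Z t j i / of_real ((q i + q j) / 2))
       = of_real (N - (\<Sum>t<T. n t))" by (simp only:)
    have "(\<Sum>t<T. \<Sum>s<t. \<Sum>i<d. \<Sum>j<d. Z s i j * Z t j i / of_real ((q i + q j) / 2))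
       = (2 * (\<Sum>t<T. \<Sum>s<t. \<Sum>i<d. \<Sum>j<d. Z s i j * Z t j i / of_real ((q i + q j) / 2))) / 2" by simp
    also have "\<dots> = of_real ((N - (\<Sum>t<T. n t)) / 2)" unfolding X2 by simp
    finally show ?thesis unfolding c1 .
  qed
  have EM: "expect d T (prod_state T \<rho>s) (Mop d q e T)
     = of_real ((real T - 1) / real T * (1 / real (T choose 2) * ((N - (\<Sum>t<T. n t)) / 2) - 1))"
    unfolding expect_Mop cross expect_id[OF tr] by simp
  have diff: "expect d T (prod_state T \<rho>s) (Mop d q e T) - of_real \<mu>
     = of_real (1 / T - (\<Sum>t<T. n t) / (real T)\<^sup>2)"
  proof -
    have T1: "real T - 1 > 0" using T2 by simp
    have "(real T - 1) / real T * (1 / real (T choose 2) * ((N - (\<Sum>t<T. n t)) / 2) - 1) - (N / (real T)\<^sup>2 - 1)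
        = 1 / T - (\<Sum>t<T. n t) / (real T)\<^sup>2"
      unfolding choose2_real using Tpos T1 by (simp add: field_simps power2_eq_square)
    thus ?thesis unfolding EM mu_eq by (metis of_real_diff)
  qed
  have trs: "mtrace d \<sigma> = 1" using sigma_state unfolding is_state_def by blast
  have d0: "d > 0"
    using trs by (cases d) (auto simp: mtrace_def)
  have qs: "(\<Sum>i<d. q i) = 1"
  proof -
    have "(1::complex) = (\<Sum>x<d. \<sigma> x x)" using trs by (simp add: mtrace_def)
    also have "\<dots> = (\<Sum>x<d. \<Sum>i<d. complex_of_real (q i) * e i x * cnj (e i x))"
      by (intro sum.cong refl) (simp add: eig)
    also have "\<dots> = (\<Sum>i<d. complex_of_real (q i) * (\<Sum>x<d. cnj (e i x) * e i x))"
      by (subst sum.swap) (simp add: sum_distrib_left mult.commute mult.left_commute)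
    also have "\<dots> = (\<Sum>i<d. complex_of_real (q i))"
      using onb by (intro sum.cong refl) (simp add: orthonormal_basis_def)
    finally show ?thesis by (metis of_real_eq_1_iff of_real_sum)
  qed
  define \<gamma> where "\<gamma> = Min (q ` {..<d})"
  have g0: "0 < \<gamma>" unfolding \<gamma>_def using d0 full_rank by (subst Min_gr_iff) auto
  have gq: "\<forall>i<d. \<gamma> \<le> q i" unfolding \<gamma>_def by auto
  have p0: "\<forall>t<T. \<forall>i<d. 0 \<le> p t i"
    using Pm_diag(2) states by (simp add: p_def Z_def)
  have ps: "\<forall>t<T. (\<Sum>i<d. p t i) = 1"
  proof (intro allI impI)
    fix t assume t: "t < T"
    have "(\<Sum>i<d. Z t i i) = 1" unfolding Z_def using Pm_trace states onb t by blast
    hence "Re (\<Sum>i<d. Z t i i) = 1" by simp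
    thus "(\<Sum>i<d. p t i) = 1" by (simp add: p_def)
  qed
  have wpos: "0 \<le> 2 / (q i + q j)" if "i < d" "j < d" for i j
    using full_rank that by (simp add: less_imp_le add_pos_pos)
  have diag: "(\<Sum>i<d. f i i) \<le> (\<Sum>i<d. \<Sum>j<d. f i j)" if "\<And>i j. i < d \<Longrightarrow> j < d \<Longrightarrow> 0 \<le> f i j"
    for f :: "nat \<Rightarrow> nat \<Rightarrow> real"
    by (intro sum_mono member_le_sum) (use that in auto)
  have wii: "2 / (q i + q i) = 1 / q i" for i by simp
  have nlo: "\<forall>t<T. (\<Sum>i<d. (p t i)\<^sup>2 / q i) \<le> n t"
  proof (intro allI impI)
    fix t assume t: "t < T"
    have "(\<Sum>i<d. (p t i)\<^sup>2 / q i) = (\<Sum>i<d. 2 / (q i + q i) * (cmod (Z t i i))\<^sup>2)"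
      by (intro sum.cong refl) (simp add: Zr[OF t])
    also have "\<dots> \<le> n t" unfolding n_def by (rule diag, rule mult_nonneg_nonneg[OF wpos]) auto
    finally show "(\<Sum>i<d. (p t i)\<^sup>2 / q i) \<le> n t" .
  qed
  have nhi: "\<forall>t<T. n t \<le> (\<Sum>i<d. \<Sum>j<d. 2 / (q i + q j) * (p t i * p t j))"
  proof (intro allI impI)
    fix t assume t: "t < T"
    show "n t \<le> (\<Sum>i<d. \<Sum>j<d. 2 / (q i + q j) * (p t i * p t j))"
      unfolding n_def
    proof (intro sum_mono mult_left_mono)
      fix i j assume "i \<in> {..<d}" "j \<in> {..<d}"
      thus "0 \<le> 2 / (q i + q j)" using wpos by blast
      show "(cmod (Z t i j))\<^sup>2 \<le> p t i * p t j"
        unfolding p_def Z_def using Pm_psd states t by blast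
    qed
  qed
  have mu: "(\<Sum>i<d. ((\<Sum>t<T. p t i) / T)\<^sup>2 / q i) - 1 \<le> \<mu>"
  proof -
    have "(\<Sum>i<d. ((\<Sum>t<T. p t i) / T)\<^sup>2 / q i)
        = (\<Sum>i<d. 2 / (q i + q i) * (cmod (\<Sum>t<T. Z t i i))\<^sup>2) / (real T)\<^sup>2"
    proof -
      have "(\<Sum>i<d. ((\<Sum>t<T. p t i) / T)\<^sup>2 / q i)
        = (\<Sum>i<d. 2 / (q i + q i) * (cmod (\<Sum>t<T. Z t i i))\<^sup>2 / (real T)\<^sup>2)"
      proof (intro sum.cong refl)
        fix i
        have "(\<Sum>t<T. Z t i i) = of_real (\<Sum>t<T. p t i)" by (simp add: Zr)
        hence "(cmod (\<Sum>t<T. Z t i i))\<^sup>2 = (\<Sum>t<T. p t i)\<^sup>2" by (simp only: norm_of_real power2_abs)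
        thus "((\<Sum>t<T. p t i) / T)\<^sup>2 / q i = 2 / (q i + q i) * (cmod (\<Sum>t<T. Z t i i))\<^sup>2 / (real T)\<^sup>2"
          by (simp add: power_divide)
      qed
      thus ?thesis by (simp add: sum_divide_distrib)
    qed
    also have "\<dots> \<le> N / (real T)\<^sup>2"
      unfolding N_def by (intro divide_right_mono diag, rule mult_nonneg_nonneg[OF wpos]) auto
    finally show ?thesis unfolding mu_eq by simp
  qed
  have main: "\<bar>1 / T - (\<Sum>t<T. n t) / (real T)\<^sup>2\<bar> \<le> sqrt (d / (\<gamma> * T)) * sqrt \<mu> + (real d - 1) / T"
    by (rule final_real[OF T2 full_rank g0 gq qs p0 ps nlo nhi mu])
  show ?thesis
    using main unfolding \<mu>_def[symmetric] \<gamma>_def[symmetric] diff norm_of_real .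
qed

end
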